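(* For every $n\geq1$, $r(n)$ equals the number of cyclic and palindromic compositions of $n$ with all parts in $\{2,3\}$, i.e. the number of equivalence classes (under cyclic rotation and reversal) of sequences $(a_1,\dots,a_m)$, $m\geq1$, $a_i\in\{2,3\}$, $\sum_i a_i=n$, such that the reversed sequence $(a_m,\dots,a_1)$ is a cyclic rotation of $(a_1,\dots,a_m)$.
   Context: The (shifted) Padovan sequence is $q(1)=0$, $q(2)=1$, $q(3)=1$, $q(n)=q(n-2)+q(n-3)$ for $n\geq4$. The sequence $r$ is defined by $r(2k-1)=q(k)$ and $r(2k)=q(k+2)$ for $k\geq1$. *)

theory Defs
  imports Main
begin

text \<open>Shifted Padovan sequence: q 1 = 0, q 2 = 1, q 3 = 1, q n = q (n-2) + q (n-3) for n >= 4.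
  The value at 0 is an unused junk value.\<close>
fun q :: "nat \<Rightarrow> nat" where
  "q 0 = 0"
| "q (Suc 0) = 0"
| "q (Suc (Suc 0)) = 1"
| "q (Suc (Suc (Suc 0))) = 1"
| "q (Suc (Suc (Suc (Suc n)))) = q (Suc (Suc n)) + q (Suc n)"

text \<open>r (2k-1) = q k and r (2k) = q (k+2) for k >= 1 (value at 0 is junk).\<close>
definition r :: "nat \<Rightarrow> nat" where
  "r n = (if odd n then q ((n + 1) div 2) else q (n div 2 + 2))"

definition comps23 :: "nat \<Rightarrow> nat list set" where
  "comps23 n = {xs. xs \<noteq> [] \<and> set xs \<subseteq> {2, 3} \<and> sum_list xs = n}"

definition dihedral_rel :: "(nat list \<times> nat list) set" where
  "dihedral_rel = {(xs, ys). \<exists>k. ys = rotate k xs \<or> ys = rev (rotate k xs)}"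

definition cyc_palindromic :: "nat list \<Rightarrow> bool" where
  "cyc_palindromic xs \<longleftrightarrow> (\<exists>k. rev xs = rotate k xs)"

definition num_cyc_pal_comps23 :: "nat \<Rightarrow> nat" where
  "num_cyc_pal_comps23 n =
     card ({xs \<in> comps23 n. cyc_palindromic xs} // (dihedral_rel \<inter> {xs \<in> comps23 n. cyc_palindromic xs} \<times> {xs \<in> comps23 n. cyc_palindromic xs}))"

end

theory Submission
  imports Defs "HOL-Number_Theory.Cong"
begin

lemma rot_back: "rotate (length w * Suc a - a) (rotate a w) = w"
proof (cases "w = []")
  case False
  then obtain l where "length w = Suc l" by (cases "length w") auto
  then have "length w * Suc a \<ge> a" by simp
  then have "rotate (length w * Suc a - a) (rotate a w) = rotate (length w * Suc a) w"
    by (simp add: rotate_rotate)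
  also have "\<dots> = w" by (rule rotate_id) simp
  finally show ?thesis .
qed simp

lemma rot_inj: "rotate a x = rotate a y \<Longrightarrow> x = y"
  by (metis length_rotate rot_back)

lemma rot_comm: "rotate a (rotate b w) = rotate b (rotate a w)"
  by (simp add: rotate_rotate add.commute)

definition per :: "'a list \<Rightarrow> nat" where
  "per w = (LEAST d. 0 < d \<and> rotate d w = w)"

lemma per_props:
  assumes "w \<noteq> []"
  shows "0 < per w" "rotate (per w) w = w" "per w \<le> length w"
proof -
  have ex: "0 < length w \<and> rotate (length w) w = w" using assms by simp
  have "0 < per w \<and> rotate (per w) w = w"
    unfolding per_def by (rule LeastI[of _ "length w"]) (rule ex)
  then show "0 < per w" "rotate (per w) w = w" by auto
  show "per w \<le> length w" unfolding per_def by (rule Least_le) (rule ex)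
qed

lemma rot_mult: "w \<noteq> [] \<Longrightarrow> rotate (c * per w) w = w"
proof (induction c)
  case (Suc c)
  have "rotate (Suc c * per w) w = rotate (per w) (rotate (c * per w) w)"
    by (simp add: rotate_rotate add.commute)
  then show ?case using Suc per_props(2)[OF Suc.prems] by simp
qed simp

lemma rot_fix_iff:
  assumes "w \<noteq> []"
  shows "rotate d w = w \<longleftrightarrow> per w dvd d"
proof
  assume h: "rotate d w = w"
  let ?g = "per w"
  have "rotate d w = rotate (d mod ?g) (rotate ((d div ?g) * ?g) w)"
    by (simp add: rotate_rotate)
  then have h2: "rotate (d mod ?g) w = w" using h rot_mult[OF assms] by simp
  show "?g dvd d"
  proof (rule ccontr)
    assume "\<not> ?g dvd d"
    then have "0 < d mod ?g" by (simp add: dvd_eq_mod_eq_0)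
    then have "?g \<le> d mod ?g" unfolding per_def using h2
      by (metis (mono_tags, lifting) Least_le per_def)
    moreover have "d mod ?g < ?g" using per_props(1)[OF assms] by simp
    ultimately show False by simp
  qed
next
  assume "per w dvd d"
  then obtain c where "d = c * per w" by (metis dvd_def mult.commute)
  then show "rotate d w = w" using rot_mult[OF assms] by simp
qed

lemma per_dvd_len: "w \<noteq> [] \<Longrightarrow> per w dvd length w"
  using rot_fix_iff[of w "length w"] by simp

lemma rot_eq_iff_le:
  assumes "w \<noteq> []" "a \<le> b"
  shows "rotate a w = rotate b w \<longleftrightarrow> a mod per w = b mod per w"
proof -
  have "rotate b w = rotate a (rotate (b - a) w)" using assms(2)
    by (simp add: rotate_rotate)
  then have "rotate a w = rotate b w \<longleftrightarrow> rotate (b - a) w = w"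
    using rot_inj by metis
  also have "\<dots> \<longleftrightarrow> per w dvd (b - a)" by (rule rot_fix_iff[OF assms(1)])
  also have "\<dots> \<longleftrightarrow> a mod per w = b mod per w" using assms(2)
    by (metis mod_eq_dvd_iff_nat)
  finally show ?thesis .
qed

lemma rot_eq_iff:
  assumes "w \<noteq> []"
  shows "rotate a w = rotate b w \<longleftrightarrow> a mod per w = b mod per w"
  using rot_eq_iff_le[OF assms, of a b] rot_eq_iff_le[OF assms, of b a] by (cases "a \<le> b") auto

lemma rev_rot: "k < length xs \<Longrightarrow> rev (rotate k xs) = rotate (length xs - k) (rev xs)"
  by (cases "k = 0") (simp_all add: rotate_drop_take rev_drop rev_take)

lemma rev_rot_ex: "\<exists>X. rev (rotate k xs) = rotate X (rev xs)"
proof (cases "xs = []")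
  case False
  then have "rev (rotate k xs) = rev (rotate (k mod length xs) xs)"
    by (metis rotate_conv_mod)
  also have "\<dots> = rotate (length xs - k mod length xs) (rev xs)"
    using False by (intro rev_rot) simp
  finally show ?thesis by blast
qed simp


lemma sum_rot1: "sum_list (rotate1 xs) = sum_list (xs::nat list)"
  by (cases xs) simp_all

lemma sum_rot: "sum_list (rotate k xs) = sum_list (xs::nat list)"
  by (induction k) (simp_all add: sum_rot1)

lemma comps_rot: "x \<in> comps23 n \<Longrightarrow> rotate k x \<in> comps23 n"
  by (simp add: comps23_def sum_rot)

lemma cp_rev_rot: "cyc_palindromic x \<Longrightarrow> \<exists>X. rev (rotate k x) = rotate X x"
proof -
  assume "cyc_palindromic x"
  then obtain j where j: "rev x = rotate j x" unfolding cyc_palindromic_def by blast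
  obtain X where "rev (rotate k x) = rotate X (rev x)" using rev_rot_ex by blast
  then have "rev (rotate k x) = rotate (X + j) x" using j by (simp add: rotate_rotate)
  then show ?thesis by blast
qed

lemma cp_rot: "cyc_palindromic x \<Longrightarrow> cyc_palindromic (rotate k x)"
proof -
  assume h: "cyc_palindromic x"
  obtain X where X: "rev (rotate k x) = rotate X x" using cp_rev_rot[OF h] by blast
  let ?Y = "length x * Suc k - k"
  have "x = rotate ?Y (rotate k x)" by (rule rot_back[symmetric])
  then have "rev (rotate k x) = rotate (X + ?Y) (rotate k x)" using X
    by (metis rotate_rotate)
  then show ?thesis unfolding cyc_palindromic_def by blast
qed

definition SS :: "nat \<Rightarrow> nat list set" where
  "SS n = {xs \<in> comps23 n. cyc_palindromic xs}"

definition RR :: "nat \<Rightarrow> (nat list \<times> nat list) set" where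
  "RR n = {(x, y). x \<in> SS n \<and> y \<in> SS n \<and> (\<exists>k. y = rotate k x)}"

lemma SS_rot: "x \<in> SS n \<Longrightarrow> rotate k x \<in> SS n"
  by (simp add: SS_def comps_rot cp_rot)

lemma rel_eq: "dihedral_rel \<inter> SS n \<times> SS n = RR n"
proof (intro set_eqI iffI)
  fix p assume "p \<in> dihedral_rel \<inter> SS n \<times> SS n"
  then obtain x y k where p: "p = (x, y)" and x: "x \<in> SS n" and y: "y \<in> SS n"
    and k: "y = rotate k x \<or> y = rev (rotate k x)"
    unfolding dihedral_rel_def by blast
  have "\<exists>k'. y = rotate k' x"
  proof (cases "y = rotate k x")
    case False
    then have "y = rev (rotate k x)" using k by blast
    moreover have "cyc_palindromic x" using x by (simp add: SS_def)
    ultimately show ?thesis using cp_rev_rot by metis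
  qed blast
  then show "p \<in> RR n" using p x y by (simp add: RR_def)
next
  fix p assume "p \<in> RR n"
  then show "p \<in> dihedral_rel \<inter> SS n \<times> SS n"
    unfolding RR_def dihedral_rel_def by blast
qed

lemma RR_equiv: "equiv (SS n) (RR n)"
proof (rule equivI)
  show "refl_on (SS n) (RR n)"
    unfolding refl_on_def RR_def by (auto intro: exI[of _ 0])
  show "sym (RR n)"
    unfolding sym_def RR_def by (auto intro: rot_back[symmetric])
  show "trans (RR n)"
    unfolding trans_def RR_def by (auto simp: rotate_rotate)
  show "RR n \<subseteq> SS n \<times> SS n" unfolding RR_def by auto
qed

lemma SS_nonempty: "x \<in> SS n \<Longrightarrow> x \<noteq> []"
  by (simp add: SS_def comps23_def)

lemma class_eq:
  assumes w: "w \<in> SS n"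
  shows "RR n `` {w} = (\<lambda>k. rotate k w) ` {..<per w}"
proof (intro set_eqI iffI)
  have ne: "w \<noteq> []" using SS_nonempty[OF w] .
  fix y assume "y \<in> RR n `` {w}"
  then obtain k where "y = rotate k w" unfolding RR_def by auto
  moreover have "rotate k w = rotate (k mod per w) w"
    using rot_eq_iff[OF ne] per_props(1)[OF ne] by simp
  moreover have "k mod per w < per w" using per_props(1)[OF ne] by simp
  ultimately show "y \<in> (\<lambda>k. rotate k w) ` {..<per w}" by blast
next
  fix y assume "y \<in> (\<lambda>k. rotate k w) ` {..<per w}"
  then show "y \<in> RR n `` {w}" using w SS_rot unfolding RR_def by auto
qed

lemma class_inj:
  assumes "w \<noteq> []"
  shows "inj_on (\<lambda>k. rotate k w) {..<per w}"
  using rot_eq_iff[OF assms] by (auto simp: inj_on_def)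


lemma add_mod_cancel_nat: "(a + k) mod (g::nat) = (b + k) mod g \<longleftrightarrow> a mod g = b mod g"
  using cong_add_rcancel_nat[of a k b g] by (simp add: cong_def)

lemma rot_cond:
  assumes w: "w \<noteq> []" and j: "rev w = rotate j w" and k: "k < per w"
  shows "rev (rotate k w) = rotate d (rotate k w) \<longleftrightarrow> (2*k+d) mod per w = j mod per w"
proof -
  let ?m = "length w" and ?g = "per w"
  have km: "k < ?m" using k per_props(3)[OF w] by simp
  have "rev (rotate k w) = rotate (?m - k) (rev w)" by (rule rev_rot[OF km])
  also have "\<dots> = rotate (?m - k + j) w" unfolding j by (rule rotate_rotate)
  finally have 1: "rev (rotate k w) = rotate (?m - k + j) w" .
  have 2: "rotate d (rotate k w) = rotate (d + k) w" by (rule rotate_rotate)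
  have "rev (rotate k w) = rotate d (rotate k w) \<longleftrightarrow> (?m - k + j) mod ?g = (d + k) mod ?g"
    unfolding 1 2 by (rule rot_eq_iff[OF w])
  also have "\<dots> \<longleftrightarrow> (?m - k + j + k) mod ?g = (d + k + k) mod ?g"
    by (rule add_mod_cancel_nat[symmetric])
  also have "?m - k + j + k = ?m + j" using km by simp
  also have "(?m + j) mod ?g = j mod ?g" using per_dvd_len[OF w]
    by (metis mod_add_self1 mod_add_left_eq dvd_imp_mod_0 add_0)
  also have "d + k + k = 2*k+d" by simp
  finally show ?thesis by auto
qed

lemma num_lemma:
  assumes g: "0 < (g::nat)" and c: "c < g"
  shows "card {k. k < g \<and> (2*k) mod g = c} + card {k. k < g \<and> (2*k+1) mod g = c} = 2"
proof -
  let ?A = "{k. k < g \<and> (2*k) mod g = c}" and ?B = "{k. k < g \<and> (2*k+1) mod g = c}"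
  have e: "{s. s < 2*g \<and> s mod g = c} = (\<lambda>k. 2*k) ` ?A \<union> (\<lambda>k. 2*k+1) ` ?B"
  proof (intro set_eqI iffI)
    fix s assume s: "s \<in> {s. s < 2*g \<and> s mod g = c}"
    show "s \<in> (\<lambda>k. 2*k) ` ?A \<union> (\<lambda>k. 2*k+1) ` ?B"
    proof (cases "even s")
      case True
      then have "s = 2 * (s div 2)" by simp
      moreover have "s div 2 \<in> ?A" using s True by auto
      ultimately show ?thesis by blast
    next
      case False
      then have "s = 2 * (s div 2) + 1" by simp
      moreover have "s div 2 \<in> ?B" using s False by auto
      ultimately show ?thesis by blast
    qed
  qed auto
  have e2: "{s. s < 2*g \<and> s mod g = c} = {c, c + g}"
  proof (intro set_eqI iffI)
    fix s assume s: "s \<in> {s. s < 2*g \<and> s mod g = c}"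
    show "s \<in> {c, c+g}"
    proof (cases "s < g")
      case True then show ?thesis using s by simp
    next
      case False
      then have "s - g < g" using s by auto
      then have "s mod g = s - g" using False by (simp add: le_mod_geq)
      then show ?thesis using s False by auto
    qed
  qed (use c in auto)
  have fin: "finite ?A" "finite ?B" by auto
  have "card ((\<lambda>k. 2*k) ` ?A \<union> (\<lambda>k. 2*k+1) ` ?B) = card ((\<lambda>k. 2*k) ` ?A) + card ((\<lambda>k. 2*k+1) ` ?B)"
  proof (rule card_Un_disjoint)
    show "(\<lambda>k. 2*k) ` ?A \<inter> (\<lambda>k. 2*k+1) ` ?B = {}"
    proof (rule ccontr)
      assume "(\<lambda>k. 2*k) ` ?A \<inter> (\<lambda>k. 2*k+1) ` ?B \<noteq> {}"
      then obtain a b where "2*a = 2*b+(1::nat)" by blast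
      then show False by presburger
    qed
  qed auto
  also have "\<dots> = card ?A + card ?B"
    by (simp add: card_image inj_on_def)
  finally have X: "card ((\<lambda>k. 2*k) ` ?A \<union> (\<lambda>k. 2*k+1) ` ?B) = card ?A + card ?B" .
  have "card ((\<lambda>k. 2*k) ` ?A \<union> (\<lambda>k. 2*k+1) ` ?B) = 2"
    unfolding e[symmetric] e2 using g by simp
  then show ?thesis using X by simp
qed

lemma class_count:
  assumes w: "w \<in> SS n"
  shows "card {y \<in> RR n `` {w}. rev y = y} + card {y \<in> RR n `` {w}. rev y = rotate 1 y} = 2"
proof -
  have ne: "w \<noteq> []" using SS_nonempty[OF w] .
  obtain j where j: "rev w = rotate j w" using w unfolding SS_def cyc_palindromic_def by blast
  let ?g = "per w"
  let ?f = "\<lambda>k. rotate k w"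
  have cl: "RR n `` {w} = ?f ` {..<?g}" by (rule class_eq[OF w])
  have inj: "inj_on ?f {..<?g}" by (rule class_inj[OF ne])
  have gen: "card {y \<in> RR n `` {w}. rev y = rotate d y} = card {k. k < ?g \<and> (2*k+d) mod ?g = j mod ?g}" for d
  proof -
    have "{y \<in> RR n `` {w}. rev y = rotate d y} = ?f ` {k. k < ?g \<and> (2*k+d) mod ?g = j mod ?g}"
      using cl rot_cond[OF ne j] by auto
    moreover have "inj_on ?f {k. k < ?g \<and> (2*k+d) mod ?g = j mod ?g}"
      by (rule inj_on_subset[OF inj]) auto
    ultimately show ?thesis by (simp add: card_image)
  qed
  have "card {y \<in> RR n `` {w}. rev y = y} = card {y \<in> RR n `` {w}. rev y = rotate 0 y}" by simp
  then show ?thesis using gen[of 0] gen[of 1] num_lemma[of ?g "j mod ?g"] per_props(1)[OF ne]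
    by simp
qed


lemma len_le_sum: "set xs \<subseteq> {2,3} \<Longrightarrow> length xs \<le> sum_list (xs::nat list)"
  by (induction xs) auto

lemma finite_SS: "finite (SS n)"
proof -
  have "SS n \<subseteq> {xs. set xs \<subseteq> {2,3::nat} \<and> length xs \<le> n}"
  proof
    fix xs assume "xs \<in> SS n"
    then have "set xs \<subseteq> {2,3}" "sum_list xs = n" unfolding SS_def comps23_def by auto
    then show "xs \<in> {xs. set xs \<subseteq> {2,3::nat} \<and> length xs \<le> n}" using len_le_sum by auto
  qed
  moreover have "finite {xs. set xs \<subseteq> {2,3::nat} \<and> length xs \<le> n}"
    by (rule finite_lists_length_le) simp
  ultimately show ?thesis by (rule finite_subset)
qed

lemma sum_classes:
  fixes P :: "nat list \<Rightarrow> bool"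
  shows "card {w \<in> SS n. P w} = (\<Sum>C \<in> SS n // RR n. card {y \<in> C. P y})"
proof -
  have eqv: "equiv (SS n) (RR n)" by (rule RR_equiv)
  have "{w \<in> SS n. P w} = \<Union> ((\<lambda>C. {y \<in> C. P y}) ` (SS n // RR n))"
    using Union_quotient[OF eqv] by blast
  moreover have "card (\<Union> ((\<lambda>C. {y \<in> C. P y}) ` (SS n // RR n))) = (\<Sum>C \<in> SS n // RR n. card {y \<in> C. P y})"
  proof (rule card_UN_disjoint)
    show "finite (SS n // RR n)"
      by (rule finite_quotient[OF finite_SS]) (simp add: RR_def, blast)
    show "\<forall>C\<in>SS n // RR n. finite {y \<in> C. P y}"
    proof
      fix C assume "C \<in> SS n // RR n"
      then have "C \<subseteq> SS n" using Union_quotient[OF eqv] by blast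
      then have "{y \<in> C. P y} \<subseteq> SS n" by blast
      then show "finite {y \<in> C. P y}" using finite_SS by (rule finite_subset)
    qed
    show "\<forall>C\<in>SS n // RR n. \<forall>D\<in>SS n // RR n. C \<noteq> D \<longrightarrow> {y \<in> C. P y} \<inter> {y \<in> D. P y} = {}"
      using quotient_disj[OF eqv] by blast
  qed
  ultimately show ?thesis by simp
qed

lemma main_count:
  "card {w \<in> SS n. rev w = w} + card {w \<in> SS n. rev w = rotate 1 w} = 2 * card (SS n // RR n)"
proof -
  have "card {w \<in> SS n. rev w = w} + card {w \<in> SS n. rev w = rotate 1 w}
      = (\<Sum>C \<in> SS n // RR n. card {y \<in> C. rev y = y} + card {y \<in> C. rev y = rotate 1 y})"
    by (simp add: sum_classes sum.distrib)
  also have "\<dots> = (\<Sum>C \<in> SS n // RR n. 2)"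
  proof (rule sum.cong)
    fix C assume "C \<in> SS n // RR n"
    then obtain w where "C = RR n `` {w}" "w \<in> SS n" by (rule quotientE)
    then show "card {y \<in> C. rev y = y} + card {y \<in> C. rev y = rotate 1 y} = 2"
      using class_count by simp
  qed simp
  finally show ?thesis by simp
qed

definition PS :: "nat \<Rightarrow> nat list set" where
  "PS n = {w. set w \<subseteq> {2,3} \<and> sum_list w = n \<and> rev w = w}"

fun pp :: "nat \<Rightarrow> nat" where
  "pp 0 = 1"
| "pp (Suc 0) = 0"
| "pp (Suc (Suc 0)) = 1"
| "pp (Suc (Suc (Suc 0))) = 1"
| "pp (Suc (Suc (Suc (Suc n)))) = pp n + (if 2 \<le> n then pp (n - 2) else 0)"

lemma small_list:
  assumes "set w \<subseteq> {2,3::nat}" "sum_list w < 4"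
  shows "w = [] \<or> w = [2] \<or> w = [3]"
proof (cases w)
  case (Cons a u)
  show ?thesis
  proof (cases u)
    case (Cons b v)
    then have "sum_list w \<ge> a + b" using \<open>w = a # u\<close> by simp
    moreover have "a \<ge> 2" "b \<ge> 2" using assms(1) \<open>w = a # u\<close> Cons by auto
    ultimately show ?thesis using assms(2) by simp
  qed (use assms Cons in auto)
qed simp

lemma PS_small_aux:
  assumes "k < 4"
  shows "PS k = {w. w \<in> {[],[2],[3]} \<and> sum_list w = k}"
proof (intro set_eqI iffI)
  fix w assume "w \<in> PS k"
  then have "set w \<subseteq> {2,3}" "sum_list w = k" unfolding PS_def by auto
  then show "w \<in> {w. w \<in> {[],[2],[3]} \<and> sum_list w = k}" using small_list assms by auto
next
  fix w assume "w \<in> {w. w \<in> {[],[2],[3]} \<and> sum_list w = k}"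
  then show "w \<in> PS k" unfolding PS_def by auto
qed

lemma PS_small: "PS 0 = {[]}" "PS 1 = {}" "PS 2 = {[2]}" "PS 3 = {[3]}"
  by (subst PS_small_aux; auto)+


lemma PS_step:
  assumes n: "4 \<le> n"
  shows "PS n = (\<lambda>P. 2 # P @ [2]) ` PS (n - 4) \<union> (if 6 \<le> n then (\<lambda>P. 3 # P @ [3]) ` PS (n - 6) else {})"
proof (intro set_eqI iffI)
  fix w assume w: "w \<in> PS n"
  then have s: "set w \<subseteq> {2,3}" "sum_list w = n" "rev w = w" unfolding PS_def by auto
  have ns: "\<not> (w = [] \<or> w = [2] \<or> w = [3])" using s(2) n by auto
  have "w = [] \<or> (\<exists>a. w = [a] \<and> a \<in> {2,3}) \<or> (\<exists>a u. w = a # u \<and> u \<noteq> [])"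
    using s(1) by (cases w) auto
  then obtain a u where au: "w = a # u" "u \<noteq> []" using ns by blast
  then obtain v b where vb: "u = v @ [b]" by (metis rev_exhaust)
  have w2: "w = a # v @ [b]" using au vb by simp
  have "rev w = b # rev v @ [a]" unfolding w2 by simp
  then have e1: "b # rev v @ [a] = a # v @ [b]" using s(3) w2 by metis
  then have "b = a" "rev v @ [a] = v @ [b]" by (metis list.inject)+
  then have ab: "b = a" "rev v = v" by (metis append1_eq_conv)+
  have a: "a \<in> {2,3}" and sv: "set v \<subseteq> {2,3}" using s(1) w2 by auto
  have sum: "sum_list v + 2 * a = n" using s(2) w2 ab by simp
  show "w \<in> (\<lambda>P. 2 # P @ [2]) ` PS (n - 4) \<union> (if 6 \<le> n then (\<lambda>P. 3 # P @ [3]) ` PS (n - 6) else {})"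
  proof (cases "a = 2")
    case True
    then have "v \<in> PS (n - 4)" using sum sv ab unfolding PS_def by auto
    moreover have "w = 2 # v @ [2]" using w2 ab True by simp
    ultimately show ?thesis by blast
  next
    case False
    then have a3: "a = 3" using a by auto
    then have "v \<in> PS (n - 6)" "6 \<le> n" using sum sv ab unfolding PS_def by auto
    moreover have "w = 3 # v @ [3]" using w2 ab a3 by simp
    ultimately show ?thesis by simp
  qed
next
  fix w assume h: "w \<in> (\<lambda>P. 2 # P @ [2]) ` PS (n - 4) \<union> (if 6 \<le> n then (\<lambda>P. 3 # P @ [3]) ` PS (n - 6) else {})"
  show "w \<in> PS n"
  proof (cases "w \<in> (\<lambda>P. 2 # P @ [2]) ` PS (n - 4)")
    case True
    then obtain P where "w = 2 # P @ [2]" "P \<in> PS (n - 4)" by blast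
    then show ?thesis using n unfolding PS_def by auto
  next
    case False
    then have "6 \<le> n" "w \<in> (\<lambda>P. 3 # P @ [3]) ` PS (n - 6)" using h by (auto split: if_splits)
    then obtain P where "w = 3 # P @ [3]" "P \<in> PS (n - 6)" by blast
    then show ?thesis using \<open>6 \<le> n\<close> unfolding PS_def by auto
  qed
qed

lemma pp_small: "pp 0 = 1" "pp 1 = 0" "pp 2 = 1" "pp 3 = 1"
  by (simp_all add: eval_nat_numeral)

lemma card_PS: "card (PS n) = pp n"
proof (induction n rule: less_induct)
  case (less n)
  show ?case
  proof (cases "n < 4")
    case True
    then have "n = 0 \<or> n = 1 \<or> n = 2 \<or> n = 3" by auto
    then show ?thesis using PS_small pp_small by (elim disjE) simp_all
  next
    case False
    have "n = Suc (Suc (Suc (Suc (n - 4))))" using False by simp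
    then obtain m where m: "n = Suc (Suc (Suc (Suc m)))" by blast
    have fin: "finite (PS k)" for k
    proof -
      have "PS k \<subseteq> {xs. set xs \<subseteq> {2,3::nat} \<and> length xs \<le> k}"
        unfolding PS_def using len_le_sum by auto
      moreover have "finite {xs. set xs \<subseteq> {2,3::nat} \<and> length xs \<le> k}"
        by (rule finite_lists_length_le) simp
      ultimately show ?thesis by (rule finite_subset)
    qed
    have inj2: "inj_on (\<lambda>P. 2 # P @ [2::nat]) A" for A by (auto simp: inj_on_def)
    have inj3: "inj_on (\<lambda>P. 3 # P @ [3::nat]) A" for A by (auto simp: inj_on_def)
    have "card (PS n) = card ((\<lambda>P. 2 # P @ [2]) ` PS (n - 4)) + card (if 6 \<le> n then (\<lambda>P. 3 # P @ [3]) ` PS (n - 6) else {})"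
      unfolding PS_step[OF leI[OF False]]
    proof (rule card_Un_disjoint)
      show "finite ((\<lambda>P. 2 # P @ [2]) ` PS (n - 4))" using fin by simp
      show "finite (if 6 \<le> n then (\<lambda>P. 3 # P @ [3::nat]) ` PS (n - 6) else {})" using fin by simp
      show "(\<lambda>P. 2 # P @ [2]) ` PS (n - 4) \<inter> (if 6 \<le> n then (\<lambda>P. 3 # P @ [3::nat]) ` PS (n - 6) else {}) = {}"
        by auto
    qed
    also have "\<dots> = card (PS (n - 4)) + (if 6 \<le> n then card (PS (n - 6)) else 0)"
      by (simp add: card_image inj2 inj3)
    also have "\<dots> = pp (n - 4) + (if 6 \<le> n then pp (n - 6) else 0)"
      using less False by simp
    also have "\<dots> = pp n" using m by simp
    finally show ?thesis .
  qed
qed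

definition RS :: "nat \<Rightarrow> nat list set" where
  "RS n = {w. set w \<subseteq> {2,3} \<and> sum_list w = n \<and> rev w = rotate 1 w}"

lemma RS_eq:
  assumes n: "1 \<le> n"
  shows "RS n = (if 2 \<le> n then Cons 2 ` PS (n - 2) else {}) \<union> (if 3 \<le> n then Cons 3 ` PS (n - 3) else {})"
proof (intro set_eqI iffI)
  fix w assume w: "w \<in> RS n"
  then have s: "set w \<subseteq> {2,3}" "sum_list w = n" "rev w = rotate 1 w" unfolding RS_def by auto
  then obtain a v where av: "w = a # v" using n by (cases w) auto
  then have "rev v = v" using s(3) by simp
  moreover have "a \<in> {2,3}" "set v \<subseteq> {2,3}" "sum_list v + a = n" using s av by auto
  ultimately have "(a = 2 \<and> 2 \<le> n \<and> v \<in> PS (n - 2)) \<or> (a = 3 \<and> 3 \<le> n \<and> v \<in> PS (n - 3))"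
    unfolding PS_def by auto
  then show "w \<in> (if 2 \<le> n then Cons 2 ` PS (n - 2) else {}) \<union> (if 3 \<le> n then Cons 3 ` PS (n - 3) else {})"
    using av by auto
next
  fix w assume "w \<in> (if 2 \<le> n then Cons 2 ` PS (n - 2) else {}) \<union> (if 3 \<le> n then Cons 3 ` PS (n - 3) else {})"
  then have "(2 \<le> n \<and> w \<in> Cons 2 ` PS (n - 2)) \<or> (3 \<le> n \<and> w \<in> Cons 3 ` PS (n - 3))"
    by (auto split: if_splits)
  then obtain a P where "w = a # P" "P \<in> PS (n - a)" "a \<le> n" "a \<in> {2,3}" by blast
  then show "w \<in> RS n" unfolding PS_def RS_def by auto
qed


lemma q_rec: "4 \<le> K \<Longrightarrow> q K = q (K - 2) + q (K - 3)"
proof -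
  assume "4 \<le> K"
  then have "K = Suc (Suc (Suc (Suc (K - 4))))" by simp
  then obtain t where "K = Suc (Suc (Suc (Suc t)))" by blast
  then show ?thesis by simp
qed

lemma r_rec: "7 \<le> n \<Longrightarrow> r n = r (n - 4) + r (n - 6)"
proof -
  assume n: "7 \<le> n"
  show ?thesis
  proof (cases "odd n")
    case True
    let ?K = "(n + 1) div 2"
    have K: "4 \<le> ?K" using n by simp
    have o: "odd (n - 4)" "odd (n - 6)" using True n by simp_all
    have "(n - 4 + 1) div 2 = ?K - 2" "(n - 6 + 1) div 2 = ?K - 3" using n True by (auto elim!: oddE)
    then show ?thesis unfolding r_def using True o q_rec[OF K] by simp
  next
    case False
    let ?K = "n div 2 + 2"
    have K: "4 \<le> ?K" using n by simp
    have o: "even (n - 4)" "even (n - 6)" using False n by simp_all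
    have "(n - 4) div 2 + 2 = ?K - 2" "(n - 6) div 2 + 2 = ?K - 3" using n False by (auto elim!: evenE)
    then show ?thesis unfolding r_def using False o q_rec[OF K] by simp
  qed
qed

lemma pp_rec: "6 \<le> n \<Longrightarrow> pp n = pp (n - 4) + pp (n - 6)"
proof -
  assume "6 \<le> n"
  then have "n = Suc (Suc (Suc (Suc (n - 4))))" "2 \<le> n - 4" "n - 4 - 2 = n - 6" by simp_all
  then show ?thesis by (metis pp.simps(5))
qed

lemma q_vals: "q 1 = 0" "q 2 = 1" "q 3 = 1" "q 4 = 1" "q 5 = 2" "q 6 = 2" "q 7 = 3" "q 8 = 4"
  by (simp_all add: eval_nat_numeral)

lemma pp_vals: "pp 0 = 1" "pp 1 = 0" "pp 2 = 1" "pp 3 = 1" "pp 4 = 1" "pp 5 = 0" "pp 6 = 2" "pp 7 = 1" "pp 8 = 2" "pp 9 = 1" "pp 10 = 3" "pp 11 = 1" "pp 12 = 4"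
  by (simp_all add: eval_nat_numeral)

lemma arith_main: "1 \<le> n \<Longrightarrow> pp n + (if 2 \<le> n then pp (n - 2) else 0) + (if 3 \<le> n then pp (n - 3) else 0) = 2 * r n"
proof (induction n rule: less_induct)
  case (less n)
  show ?case
  proof (cases "n \<le> 12")
    case True
    then have "n \<in> {1..12}" using less.prems by simp
    then have "n = 1 \<or> n = 2 \<or> n = 3 \<or> n = 4 \<or> n = 5 \<or> n = 6 \<or> n = 7 \<or> n = 8 \<or> n = 9 \<or> n = 10 \<or> n = 11 \<or> n = 12"
      by (simp, presburger)
    then show ?thesis by (elim disjE) (simp_all add: r_def q_vals pp_vals)
  next
    case False
    have c: "1 \<le> n - 4" "2 \<le> n - 4" "3 \<le> n - 4" "1 \<le> n - 6" "2 \<le> n - 6" "3 \<le> n - 6"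
      "n - 4 < n" "n - 6 < n" "2 \<le> n" "3 \<le> n" "6 \<le> n" "6 \<le> n - 2" "6 \<le> n - 3" "7 \<le> n"
      "n - 4 - 2 = n - 6" "n - 4 - 3 = n - 7" "n - 6 - 2 = n - 8" "n - 6 - 3 = n - 9"
      "n - 2 - 4 = n - 6" "n - 2 - 6 = n - 8" "n - 3 - 4 = n - 7" "n - 3 - 6 = n - 9"
      using False by simp_all
    have IH1: "pp (n - 4) + pp (n - 6) + pp (n - 7) = 2 * r (n - 4)"
      using less.IH[of "n - 4"] c by simp
    have IH2: "pp (n - 6) + pp (n - 8) + pp (n - 9) = 2 * r (n - 6)"
      using less.IH[of "n - 6"] c by simp
    have "pp n = pp (n - 4) + pp (n - 6)" using c by (intro pp_rec) simp
    moreover have "pp (n - 2) = pp (n - 6) + pp (n - 8)" using c pp_rec[of "n - 2"] by simp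
    moreover have "pp (n - 3) = pp (n - 7) + pp (n - 9)" using c pp_rec[of "n - 3"] by simp
    moreover have "r n = r (n - 4) + r (n - 6)" using c by (intro r_rec) simp
    ultimately show ?thesis using IH1 IH2 c by simp
  qed
qed

lemma card_RS: "1 \<le> n \<Longrightarrow> card (RS n) = (if 2 \<le> n then pp (n - 2) else 0) + (if 3 \<le> n then pp (n - 3) else 0)"
proof -
  assume n: "1 \<le> n"
  have fin: "finite (PS k)" for k
  proof -
    have "PS k \<subseteq> {xs. set xs \<subseteq> {2,3::nat} \<and> length xs \<le> k}"
      unfolding PS_def using len_le_sum by auto
    moreover have "finite {xs. set xs \<subseteq> {2,3::nat} \<and> length xs \<le> k}"
      by (rule finite_lists_length_le) simp
    ultimately show ?thesis by (rule finite_subset)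
  qed
  have "card (RS n) = card (if 2 \<le> n then Cons 2 ` PS (n - 2) else {}) + card (if 3 \<le> n then Cons (3::nat) ` PS (n - 3) else {})"
    unfolding RS_eq[OF n]
  proof (rule card_Un_disjoint)
    show "finite (if 2 \<le> n then Cons 2 ` PS (n - 2) else {})" using fin by simp
    show "finite (if 3 \<le> n then Cons (3::nat) ` PS (n - 3) else {})" using fin by simp
    show "(if 2 \<le> n then Cons 2 ` PS (n - 2) else {}) \<inter> (if 3 \<le> n then Cons (3::nat) ` PS (n - 3) else {}) = {}"
      by auto
  qed
  also have "\<dots> = (if 2 \<le> n then card (PS (n - 2)) else 0) + (if 3 \<le> n then card (PS (n - 3)) else 0)"
    by (simp add: card_image)
  finally show ?thesis by (simp add: card_PS)
qed

lemma SS_pal: "1 \<le> n \<Longrightarrow> {w \<in> SS n. rev w = w} = PS n"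
  unfolding SS_def PS_def comps23_def cyc_palindromic_def
  by (auto intro: exI[of _ 0])

lemma SS_rot1: "1 \<le> n \<Longrightarrow> {w \<in> SS n. rev w = rotate 1 w} = RS n"
  unfolding SS_def RS_def comps23_def cyc_palindromic_def
  by (auto intro!: exI[of _ "Suc 0"])

theorem proposition3p3:
  fixes n :: nat
  assumes "n \<ge> 1"
  shows "r n = num_cyc_pal_comps23 n"
proof -
  have "num_cyc_pal_comps23 n = card (SS n // RR n)"
    unfolding num_cyc_pal_comps23_def SS_def[symmetric] rel_eq ..
  moreover have "card (PS n) + card (RS n) = 2 * card (SS n // RR n)"
    using main_count[of n] SS_pal[OF assms] SS_rot1[OF assms] by simp
  moreover have "card (PS n) + card (RS n) = 2 * r n"
    using arith_main[OF assms] card_RS[OF assms] card_PS[of n] by simp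
  ultimately show ?thesis by simp
qed

end
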